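(* Let $\Lambda<0$, $M>0$, $\ell\ge2$, and on the static region $r>r_h$ of Schwarzschild–anti de Sitter use the tortoise coordinate $r^*=-\int_r^\infty dr'/f(r')\in(-\infty,0)$. Then $$\phi(t,r^* )=\frac{r\,e^{w_\ell(r^*+t)}}{(\ell+2)(\ell-1)r+6M}$$ solves the Zerilli equation $(\partial_t^2-\partial_{r^*}^2+fV^Z_\ell)\phi=0$, belongs to $L^2((-\infty,0),dr^* )$ for every $t$, grows exponentially in $t$, and satisfies the Robin boundary condition $\partial_{r^*}\phi|_{r^*=0}=\tan(\alpha)\,\phi|_{r^*=0}$ with $\tan\alpha=w_\ell-\frac{2M\Lambda}{(\ell-1)(\ell+2)}$. Hence, for the dynamics defined by the self-adjoint extension of $-\partial_{r^*}^2+fV^Z_\ell$ with this boundary condition, the SAdS black hole is linearly unstable.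
   Context: $f=1-\frac{2M}{r}-\frac{\Lambda r^2}{3}$ with single positive root $r_h$; $w_\ell=\frac{1}{12M}\frac{(\ell+2)!}{(\ell-2)!}$; $\mu=(\ell-1)(\ell+2)$; Zerilli potential $V^Z_\ell=\frac{[\mu^2\ell(\ell+1)-24M^2\Lambda]r^3+6\mu^2Mr^2+36\mu M^2r+72M^3}{r^3(6M+\mu r)^2}$. The Robin condition (for $\alpha\in[-\pi,\pi]$) defines a self-adjoint extension of $-\partial_{r^*}^2+fV^Z_\ell$ on $C^\infty_0((-\infty,0))$ in $L^2((-\infty,0),dr^* )$, and the evolution is $\partial_t^2\phi+{}^\alpha\mathcal H\phi=0$ in that domain. *)

theory Defs
  imports "HOL-Analysis.Analysis"
begin

definition fSAdS :: "real \<Rightarrow> real \<Rightarrow> real \<Rightarrow> real" where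
  "fSAdS M \<Lambda> r = 1 - 2 * M / r - \<Lambda> * r ^ 2 / 3"

definition horizon :: "real \<Rightarrow> real \<Rightarrow> real" where
  "horizon M \<Lambda> = (THE r. r > 0 \<and> fSAdS M \<Lambda> r = 0)"

definition tortoise :: "real \<Rightarrow> real \<Rightarrow> real \<Rightarrow> real" where
  "tortoise M \<Lambda> r = - integral {r..} (\<lambda>s. 1 / fSAdS M \<Lambda> s)"

definition rOf :: "real \<Rightarrow> real \<Rightarrow> real \<Rightarrow> real" where
  "rOf M \<Lambda> x = (THE r. r > horizon M \<Lambda> \<and> tortoise M \<Lambda> r = x)"

definition wl :: "real \<Rightarrow> nat \<Rightarrow> real" where
  "wl M l = (1 / (12 * M)) * (fact (l + 2) / fact (l - 2))"

definition mul :: "nat \<Rightarrow> real" where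
  "mul l = (real l - 1) * (real l + 2)"

definition VZ :: "real \<Rightarrow> real \<Rightarrow> nat \<Rightarrow> real \<Rightarrow> real" where
  "VZ M \<Lambda> l r =
     (((mul l)^2 * (real l * (real l + 1)) - 24 * M^2 * \<Lambda>) * r^3
       + 6 * (mul l)^2 * M * r^2 + 36 * mul l * M^2 * r + 72 * M^3)
     / (r^3 * (6 * M + mul l * r)^2)"

definition phiSol :: "real \<Rightarrow> real \<Rightarrow> nat \<Rightarrow> real \<Rightarrow> real \<Rightarrow> real" where
  "phiSol M \<Lambda> l t x =
     rOf M \<Lambda> x * exp (wl M l * (x + t)) / ((real l + 2) * (real l - 1) * rOf M \<Lambda> x + 6 * M)"

end

theory Submission
  imports Defs
begin



locale sads =
  fixes M L :: real
  assumes Lneg: "L < 0" and Mpos: "M > 0"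
begin

abbreviation "F \<equiv> fSAdS M L"
abbreviation "h \<equiv> horizon M L"

definition Q :: "real \<Rightarrow> real \<Rightarrow> real" where "Q a b = 1 - L/3*(a^2+a*b+b^2)"

lemma Q_ge1: "Q a b \<ge> 1"
proof -
  have e: "a^2+a*b+b^2 = (a+b/2)^2 + 3/4*b^2" by (simp add: power2_eq_square algebra_simps)
  have "a^2+a*b+b^2 \<ge> 0" unfolding e by (intro add_nonneg_nonneg) auto
  hence "L/3*(a^2+a*b+b^2) \<le> 0" using Lneg by (intro mult_nonpos_nonneg) auto
  thus ?thesis unfolding Q_def by linarith
qed

lemma p_diff: "(b - 2*M - L*b^3/3) - (a - 2*M - L*a^3/3) = (b-a) * Q a b"
  unfolding Q_def by (simp add: field_simps power2_eq_square power3_eq_cube)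

lemma F_eq: "r > 0 \<Longrightarrow> F r = (r - 2*M - L*r^3/3) / r"
  unfolding fSAdS_def by (simp add: field_simps power2_eq_square power3_eq_cube)

lemma horizon_ex: "\<exists>!r. r > 0 \<and> F r = 0"
proof -
  let ?p = "\<lambda>r::real. r - 2*M - L*r^3/3"
  have c: "\<forall>x. 0 \<le> x \<and> x \<le> 2*M \<longrightarrow> isCont ?p x" by (auto intro!: continuous_intros)
  have p0: "?p 0 \<le> 0" using Mpos by simp
  have p2: "0 \<le> ?p (2*M)" using Lneg Mpos by (simp add: mult_nonpos_nonneg mult_le_0_iff)
  obtain r where r: "0 \<le> r" "r \<le> 2*M" "?p r = 0" using IVT[of ?p 0 0 "2*M", OF p0 p2 _ c] Mpos by auto
  have "r \<noteq> 0" using r Mpos by auto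
  hence rp: "r > 0" using r by auto
  show ?thesis
  proof (rule ex1I[of _ r])
    show "r > 0 \<and> F r = 0" using rp r F_eq by simp
  next
    fix s assume s: "s > 0 \<and> F s = 0"
    hence "?p s = 0" using F_eq[of s] by (simp add: divide_eq_0_iff)
    hence "(s - r) * Q r s = 0" using p_diff[of s r] r(3) by linarith
    moreover have "Q r s \<noteq> 0" using Q_ge1[of r s] by simp
    ultimately show "s = r" by simp
  qed
qed

lemma h_both: "h > 0 \<and> F h = 0"
  unfolding horizon_def by (rule theI'[OF horizon_ex])

lemma h_pos: "h > 0" and F_h: "F h = 0"
  using h_both by simp_all

lemma F_fact: "s > 0 \<Longrightarrow> F s = (s - h) * Q h s / s"
proof -
  assume s: "s > 0"
  have "h - 2*M - L*h^3/3 = 0" using F_h F_eq[OF h_pos] h_pos by (simp add: divide_eq_0_iff)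
  then show ?thesis using F_eq[OF s] p_diff[of s h] by simp
qed

lemma F_pos: "s > h \<Longrightarrow> F s > 0"
  using F_fact[of s] h_pos Q_ge1[of h s] by (simp add: divide_pos_pos)

lemma F_lower: assumes "h < r" "r \<le> s"
  shows "F s \<ge> (-L/3) * ((r-h)/r) * s^2"
proof -
  have s: "s > 0" and r: "r > 0" using assms h_pos by linarith+
  have a: "L / 3 * (h * h + h * s) \<le> 0" using Lneg h_pos s by (intro mult_nonpos_nonneg) auto
  have b: "Q h s = 1 - L / 3 * (h * h + h * s) + (-L/3) * s^2" by (simp add: Q_def algebra_simps power2_eq_square)
  have Q: "Q h s \<ge> (-L/3) * s^2" using a b by linarith
  have c: "h* s/r \<ge> h" using assms r h_pos by (simp add: field_simps mult_left_mono)
  have d: "(r-h)/r* s = s - h* s/r" using r by (simp add: field_simps)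
  have sh: "s - h \<ge> (r-h)/r * s" using c d by linarith
  have e: "0 \<le> (r-h)/r * s" using assms r s by simp
  have f: "0 \<le> (-L/3) * s^2" using Lneg by (intro mult_nonneg_nonneg) auto
  have "F s = (s-h) * Q h s / s" using F_fact[OF s] .
  also have "\<dots> \<ge> ((r-h)/r * s) * ((-L/3) * s^2) / s"
    using sh Q e f s by (intro divide_right_mono mult_mono) auto
  also have "((r-h)/r * s) * ((-L/3) * s^2) / s = ((r-h)/r * ((-L/3) * s^2)) * s / s"
    by (simp add: ac_simps)
  also have "\<dots> = (r-h)/r * ((-L/3) * s^2)" using s by simp
  also have "\<dots> = (-L/3) * ((r-h)/r) * s^2" by (simp only: ac_simps)
  finally show ?thesis .
qed

end



context sads begin

abbreviation "T \<equiv> tortoise M L"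
abbreviation "R \<equiv> rOf M L"

lemma powr_m2: fixes s :: real assumes "s > 0" shows "s powr (-2) = 1 / s^2"
proof -
  have "s powr (-2) = inverse (s powr 2)" by (rule powr_minus)
  also have "s powr 2 = s ^ 2" using assms by (simp add: powr_numeral)
  finally show ?thesis by (simp add: divide_inverse)
qed

lemma powr_m1: fixes r :: real assumes "r > 0" shows "- (r powr (-2 + 1)) / (-2 + 1) = 1 / r"
proof -
  have "r powr (-2 + 1) = r powr (- 1)" by simp
  also have "\<dots> = inverse (r powr 1)" by (rule powr_minus)
  also have "\<dots> = inverse r" using assms by simp
  finally show ?thesis by (simp add: divide_inverse)
qed

lemma F_cont: assumes hr: "h < r" shows "continuous_on {r..} (\<lambda>s. 1 / F s)"
proof -
  have "F s \<noteq> 0 \<and> s \<noteq> 0" if "s \<in> {r..}" for s using F_pos[of s] that hr h_pos by auto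
  then show ?thesis unfolding fSAdS_def by (auto intro!: continuous_intros)
qed

lemma F_isCont: "s > 0 \<Longrightarrow> isCont F s"
  unfolding fSAdS_def by (auto intro!: continuous_intros)

lemma invF_bound: assumes "h < r" "r \<le> s"
  shows "1 / F s \<le> (1 / ((-L/3) * ((r-h)/r))) * s powr (-2)"
proof -
  let ?c = "(-L/3) * ((r-h)/r)"
  have c1: "(r-h)/r > 0" using assms h_pos by (intro divide_pos_pos) auto
  have c2: "-L/3 > 0" using Lneg by simp
  have cp: "?c > 0" using c2 c1 by (rule mult_pos_pos)
  have s: "s > 0" using assms h_pos by linarith
  have lo: "F s \<ge> ?c * s^2" using F_lower[OF assms] .
  have pos: "?c * s^2 > 0" by (rule mult_pos_pos[OF cp]) (use s in simp)
  have "1 / F s \<le> 1 / (?c * s^2)" by (rule frac_le[OF _ _ pos lo]) auto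
  also have "\<dots> = (1/?c) * s powr (-2)" unfolding powr_m2[OF s] by simp
  finally show ?thesis .
qed

lemma powr_int: fixes c r :: real assumes r: "r > 0" shows "((\<lambda>s. c * s powr (-2)) has_integral (c / r)) {r..}"
proof -
  have "((\<lambda>s. s powr (-2)) has_integral (- (r powr (-2 + 1)) / (-2 + 1))) {r..}"
    by (rule has_integral_powr_to_inf) (use r in auto)
  hence "((\<lambda>s. s powr (-2)) has_integral (1 / r)) {r..}" unfolding powr_m1[OF r] .
  from has_integral_mult_right[OF this, of c] show ?thesis by simp
qed

lemma invF_integrable: assumes "h < r" shows "(\<lambda>s. 1 / F s) integrable_on {r..}"
proof -
  let ?c = "(-L/3) * ((r-h)/r)"
  have r: "r > 0" using assms h_pos by linarith
  show ?thesis
  proof (rule measurable_bounded_by_integrable_imp_integrable_real)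
    show "(\<lambda>s. 1 / F s) \<in> borel_measurable (lebesgue_on {r..})"
      by (rule continuous_imp_measurable_on_sets_lebesgue[OF F_cont[OF assms]]) simp
    show "(\<lambda>s. (1/?c) * s powr (-2)) integrable_on {r..}"
      using powr_int[OF r] unfolding integrable_on_def by blast
    show "\<bar>1 / F s\<bar> \<le> (1/?c) * s powr (-2)" if "s \<in> {r..}" for s
      using invF_bound[OF assms, of s] F_pos[of s] that assms by auto
  qed simp
qed

lemma T_diff: assumes "h < a" "a \<le> b" shows "T b - T a = integral {a..b} (\<lambda>s. 1 / F s)"
proof -
  have i1: "((\<lambda>s. 1 / F s) has_integral integral {a..b} (\<lambda>s. 1 / F s)) {a..b}"
    using F_cont[OF assms(1)] by (intro integrable_integral integrable_continuous_interval)
       (auto intro: continuous_on_subset)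
  have i2: "((\<lambda>s. 1 / F s) has_integral integral {b..} (\<lambda>s. 1 / F s)) {b..}"
    using invF_integrable[of b] assms by (intro integrable_integral) auto
  have "{a..b} \<inter> {b..} = {b}" using assms by auto
  hence ng: "negligible ({a..b} \<inter> {b..})" by simp
  have u: "{a..b} \<union> {b..} = {a..}" using assms by auto
  have "((\<lambda>s. 1 / F s) has_integral (integral {a..b} (\<lambda>s. 1 / F s) + integral {b..} (\<lambda>s. 1 / F s))) {a..}"
    using has_integral_Un[OF i1 i2 ng] u by simp
  hence "integral {a..} (\<lambda>s. 1 / F s) = integral {a..b} (\<lambda>s. 1 / F s) + integral {b..} (\<lambda>s. 1 / F s)"
    by (rule integral_unique)
  thus ?thesis unfolding tortoise_def by simp
qed

lemma T_deriv: assumes "h < r" shows "(T has_real_derivative 1 / F r) (at r)"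
proof -
  define a where "a = (h + r) / 2"
  have a: "h < a" "a < r" using assms unfolding a_def by auto
  have "((\<lambda>y. integral {a..y} (\<lambda>s. 1 / F s)) has_real_derivative 1 / F r) (at r within {a..r+1})"
    using F_cont[OF a(1)] a by (intro integral_has_real_derivative) (auto intro: continuous_on_subset)
  moreover have "at r within {a..r+1} = at r"
    using a by (intro at_within_interior) auto
  ultimately have d: "((\<lambda>y. integral {a..y} (\<lambda>s. 1 / F s)) has_real_derivative 1 / F r) (at r)" by simp
  have "((\<lambda>y. T a + integral {a..y} (\<lambda>s. 1 / F s)) has_real_derivative 1 / F r) (at r)"
    using DERIV_add[OF DERIV_const d] by simp
  then show ?thesis
  proof (rule has_field_derivative_transform_within_open[where S="{a<..}"])
    show "T a + integral {a..y} (\<lambda>s. 1 / F s) = T y" if "y \<in> {a<..}" for y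
      using T_diff[of a y] a that by simp
  qed (use a in auto)
qed

lemma T_isCont: "h < r \<Longrightarrow> isCont T r"
  using T_deriv DERIV_isCont by blast

lemma T_mono: assumes "h < a" "a < b" shows "T a < T b"
proof (rule DERIV_pos_imp_increasing[OF assms(2)])
  fix x assume "a \<le> x" "x \<le> b"
  hence "h < x" using assms by linarith
  thus "\<exists>y. (T has_real_derivative y) (at x) \<and> 0 < y" using T_deriv[of x] F_pos[of x] by (intro exI[of _ "1 / F x"]) auto
qed

lemma T_le0: assumes "h < r" shows "T r \<le> 0"
proof -
  have "0 \<le> integral {r..} (\<lambda>s. 1 / F s)"
    using invF_integrable[OF assms] F_pos assms by (intro integral_nonneg) (auto simp: less_imp_le)
  thus ?thesis unfolding tortoise_def by simp
qed

lemma T_neg: "h < r \<Longrightarrow> T r < 0"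
  using T_mono[of r "r+1"] T_le0[of "r+1"] by simp

lemma T_lim: "(T \<longlongrightarrow> 0) at_top"
proof -
  define r0 where "r0 = h + 1"
  have r0: "h < r0" unfolding r0_def by simp
  define c where "c = 1 / ((-L/3) * ((r0-h)/r0))"
  have up: "T r \<ge> - (c / r)" if "r \<ge> r0" for r
  proof -
    have rr: "h < r" "r > 0" using that r0 h_pos by linarith+
    have "integral {r..} (\<lambda>s. 1 / F s) \<le> integral {r..} (\<lambda>s. c * s powr (-2))"
      using invF_integrable[OF rr(1)] powr_int[OF rr(2), of c] invF_bound[OF r0] that
      unfolding c_def by (intro integral_le) (auto simp: integrable_on_def)
    also have "\<dots> = c / r" using powr_int[OF rr(2), of c] by (rule integral_unique)
    finally show ?thesis unfolding tortoise_def by simp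
  qed
  have l: "((\<lambda>r. - (c * inverse r)) \<longlongrightarrow> - (c * 0)) at_top"
    by (intro tendsto_intros tendsto_inverse_0_at_top filterlim_ident)
  show ?thesis
  proof (rule tendsto_sandwich[OF _ _ _ tendsto_const])
    show "\<forall>\<^sub>F r in at_top. - (c * inverse r) \<le> T r"
      using eventually_ge_at_top[of r0] by eventually_elim (use up in \<open>simp add: divide_inverse\<close>)
    show "\<forall>\<^sub>F r in at_top. T r \<le> 0"
      using eventually_ge_at_top[of r0] by eventually_elim (use T_le0 r0 in auto)
    show "((\<lambda>r. - (c * inverse r)) \<longlongrightarrow> 0) at_top" using l by simp
  qed
qed

end



context sads begin

lemma Q_mono: "0 \<le> s \<Longrightarrow> s \<le> t \<Longrightarrow> Q h s \<le> Q h t"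
proof -
  assume st: "0 \<le> s" "s \<le> t"
  have "h * s + s^2 \<le> h * t + t^2" using st h_pos
    by (intro add_mono mult_left_mono power_mono) auto
  hence "L / 3 * (h^2 + h * t + t^2) \<le> L / 3 * (h^2 + h * s + s^2)"
    using Lneg by (intro mult_left_mono_neg) auto
  thus ?thesis unfolding Q_def by linarith
qed

lemma T_low: "\<exists>r. h < r \<and> r < h + 1 \<and> T r < x"
proof -
  define K where "K = Q h (h+1) / h"
  have Kp: "K > 0" unfolding K_def using Q_ge1[of h "h+1"] h_pos by simp
  have Fup: "F s \<le> K * (s - h)" if "h < s" "s \<le> h + 1" for s
  proof -
    have s: "s > 0" using that h_pos by linarith
    have "F s = (s - h) * (Q h s / s)" using F_fact[OF s] by simp
    also have "\<dots> \<le> (s - h) * K" unfolding K_def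
    proof (intro mult_left_mono frac_le)
      show "Q h s \<le> Q h (h+1)" using that s by (intro Q_mono) auto
    qed (use that h_pos Q_ge1[of h "h+1"] in auto)
    finally show ?thesis by (simp add: mult.commute)
  qed
  have key: "T r \<le> T (h+1) + ln (r - h) / K" if "h < r" "r < h + 1" for r
  proof -
    have ftc: "((\<lambda>s. 1 / (K * (s - h))) has_integral (ln ((h+1) - h) / K - ln (r - h) / K)) {r..h+1}"
    proof (rule fundamental_theorem_of_calculus[where f="\<lambda>s. ln (s - h) / K"])
      show "r \<le> h + 1" using that by simp
      fix s assume "s \<in> {r..h+1}"
      hence "s - h > 0" using that by auto
      thus "((\<lambda>s. ln (s - h) / K) has_vector_derivative 1 / (K * (s - h))) (at s within {r..h+1})"
        using Kp by (auto intro!: derivative_eq_intros simp flip: has_real_derivative_iff_has_vector_derivative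
            simp: field_simps)
    qed
    have "integral {r..h+1} (\<lambda>s. 1 / (K * (s - h))) \<le> integral {r..h+1} (\<lambda>s. 1 / F s)"
    proof (rule integral_le)
      show "(\<lambda>s. 1 / (K * (s - h))) integrable_on {r..h+1}" using ftc by (auto simp: integrable_on_def)
      show "(\<lambda>s. 1 / F s) integrable_on {r..h+1}"
        using F_cont[of r] that by (intro integrable_continuous_interval) (auto intro: continuous_on_subset)
      fix s assume s: "s \<in> {r..h+1}"
      hence "h < s" "s \<le> h+1" using that by auto
      thus "1 / (K * (s - h)) \<le> 1 / F s" using Fup[of s] F_pos[of s] by (intro divide_left_mono) auto
    qed
    also have "\<dots> = T (h+1) - T r" using T_diff[of r "h+1"] that by simp
    finally show ?thesis using integral_unique[OF ftc] by simp
  qed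
  define e where "e = min (1/2) (exp (K * (x - T (h+1) - 1)))"
  have e: "e > 0" "e \<le> 1/2" unfolding e_def by auto
  have "ln e \<le> ln (exp (K * (x - T (h+1) - 1)))" unfolding e_def using e
    by (subst ln_le_cancel_iff) (auto simp: e_def)
  hence le: "ln e \<le> K * (x - T (h+1) - 1)" by simp
  have a1: "T (h + e) \<le> T (h+1) + ln e / K" using key[of "h+e"] e by simp
  have a2: "ln e / K \<le> x - T (h+1) - 1" using le by (subst pos_divide_le_eq[OF Kp]) (simp add: mult.commute)
  have "T (h + e) < x" using a1 a2 by linarith
  thus ?thesis using e by (intro exI[of _ "h+e"]) auto
qed

lemma R_ex: assumes "x < 0" shows "\<exists>!r. r > h \<and> T r = x"
proof -
  obtain r1 where r1: "h < r1" "T r1 < x" using T_low[of x] by blast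
  have "eventually (\<lambda>r. T r > x) at_top" using T_lim assms by (rule order_tendstoD)
  then obtain N where N: "\<And>r. r \<ge> N \<Longrightarrow> T r > x" unfolding eventually_at_top_linorder by blast
  define r2 where "r2 = max N r1"
  have r2: "T r2 > x" "r1 \<le> r2" using N unfolding r2_def by auto
  obtain r where r: "r1 \<le> r" "r \<le> r2" "T r = x"
    using IVT[of T r1 x r2] r1 r2 T_isCont by (smt (verit))
  show ?thesis
  proof (rule ex1I[of _ r])
    show "r > h \<and> T r = x" using r r1 by auto
    fix s assume s: "s > h \<and> T s = x"
    show "s = r"
    proof (rule ccontr)
      assume "s \<noteq> r"
      hence "s < r \<or> r < s" by auto
      thus False using T_mono[of s r] T_mono[of r s] s r r1 by auto
    qed
  qed
qed

lemma R_prop: "x < 0 \<Longrightarrow> h < R x \<and> T (R x) = x"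
  unfolding rOf_def by (rule theI'[OF R_ex])

lemma R_T: assumes "h < r" shows "R (T r) = r"
  unfolding rOf_def
proof (rule the_equality)
  show "h < r \<and> T r = T r" using assms by simp
  fix s assume "h < s \<and> T s = T r"
  thus "s = r" using T_mono[of s r] T_mono[of r s] assms by (cases s r rule: linorder_cases) auto
qed

lemma R_cont: assumes "x < 0" shows "isCont R x"
proof -
  have p: "h < R x" "T (R x) = x" using R_prop[OF assms] by auto
  have hz: "h < z" if "\<bar>z - R x\<bar> \<le> (R x - h) / 2" for z
  proof -
    have "- (z - R x) \<le> (R x - h) / 2" using that by (rule abs_le_D2)
    thus "h < z" using p by (simp add: field_simps)
  qed
  have "isCont R (T (R x))"
  proof (rule isCont_inverse_function[where d="(R x - h)/2" and f=T and g=R and x="R x"])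
    show "0 < (R x - h) / 2" using p by simp
  next
    fix z assume "\<bar>z - R x\<bar> \<le> (R x - h) / 2"
    thus "R (T z) = z" using R_T hz by auto
  next
    fix z assume "\<bar>z - R x\<bar> \<le> (R x - h) / 2"
    thus "isCont T z" using T_isCont hz by auto
  qed
  thus ?thesis using p by simp
qed

lemma R_deriv: assumes "x < 0" shows "(R has_real_derivative F (R x)) (at x)"
proof -
  have p: "h < R x" "T (R x) = x" using R_prop[OF assms] by auto
  have "(R has_real_derivative inverse (1 / F (R x))) (at x)"
  proof (rule DERIV_inverse_function[where f=T and a="x - 1" and b=0])
    show "(T has_real_derivative 1 / F (R x)) (at (R x))" using T_deriv p by simp
    show "1 / F (R x) \<noteq> 0" using F_pos[OF p(1)] by simp
    show "x - 1 < x" "x < 0" using assms by auto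
    show "T (R y) = y" if "x - 1 < y" "y < 0" for y using R_prop that by simp
    show "isCont R x" using R_cont assms .
  qed
  thus ?thesis by simp
qed

lemma R_gt: assumes "h < B" "T B < x" "x < 0" shows "B < R x"
proof (rule ccontr)
  assume "\<not> B < R x"
  hence "R x \<le> B" by simp
  moreover have "h < R x" "T (R x) = x" using R_prop assms by auto
  ultimately have "T (R x) \<le> T B" using T_mono[of "R x" B] by (cases "R x = B") auto
  thus False using assms \<open>T (R x) = x\<close> by simp
qed

lemma R_lim: "filterlim R at_top (at_left 0)"
  unfolding filterlim_at_top
proof
  fix Z :: real
  define B where "B = max Z (h+1)"
  have B: "h < B" "Z \<le> B" unfolding B_def by auto
  have "T B < 0" using T_neg B by simp
  hence "eventually (\<lambda>x. x \<in> {T B<..<0}) (at_left 0)" by (rule eventually_at_left_real)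
  thus "eventually (\<lambda>x. Z \<le> R x) (at_left 0)"
    by eventually_elim (use R_gt[OF B(1)] B in \<open>force\<close>)
qed

end



lemma fact_ratio: assumes "l \<ge> 2"
  shows "(fact (l + 2) / fact (l - 2) :: real) = (real l + 2) * (real l + 1) * real l * (real l - 1)"
proof -
  obtain k where k: "l = k + 2" using assms by (metis add.commute le_Suc_ex)
  have "l + 2 = Suc (Suc (Suc (Suc k)))" "l - 2 = k" using k by auto
  moreover have "(fact k :: real) \<noteq> 0" by simp
  ultimately show ?thesis using k by (simp add: fact_Suc field_simps)
qed

lemma wl_eq: assumes "l \<ge> 2"
  shows "wl M l = ((real l + 2) * (real l - 1)) * ((real l + 2) * (real l - 1) + 2) / (12 * M)"
proof -
  have e: "(real l + 2) * (real l - 1) + 2 = real l * (real l + 1)" by (simp add: algebra_simps)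
  show ?thesis unfolding wl_def fact_ratio[OF assms] e by (simp add: field_simps)
qed

lemma key_d: fixes r M L m d N :: real assumes "r \<noteq> 0" "d \<noteq> 0" "M \<noteq> 0"
  shows "-(-12*M*m/d^3)*(1-2*M/r-L*r^2/3) - 6*M/d^2*(2*M/r^2-2*L*r/3) - 2*(m*(m+2)/(12*M))*(6*M/d^2) + N/(r^3*d^2) * (r/d)
     = (12*M*m*r*(3*r-6*M-L*r^3) - 6*M*(6*M-2*L*r^3)*d - 3*r^2*m*(m+2)*d + 3*N) / (3*r^2*d^3)"
  using assms by (simp add: field_simps power2_eq_square power3_eq_cube)

lemma key_poly: fixes r M L m :: real
  shows "12*M*m*r*(3*r-6*M-L*r^3) - 6*M*(6*M-2*L*r^3)*(m*r+6*M) - 3*r^2*m*(m+2)*(m*r+6*M) + 3*((m^2*(m+2) - 24*M^2*L)*r^3 + 6*m^2*M*r^2 + 36*m*M^2*r + 72*M^3) = 0"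
  by (simp add: algebra_simps power2_eq_square power3_eq_cube)

lemma key0: fixes r M L m :: real assumes "r>0" "M>0" "m>0"
  shows "-(-12*M*m/(m*r+6*M)^3)*(1-2*M/r-L*r^2/3) - 6*M/(m*r+6*M)^2*(2*M/r^2-2*L*r/3) - 2*(m*(m+2)/(12*M))*(6*M/(m*r+6*M)^2) + ((m^2*(m+2) - 24*M^2*L)*r^3 + 6*m^2*M*r^2 + 36*m*M^2*r + 72*M^3)/(r^3*(6*M+m*r)^2) * (r/(m*r+6*M)) = 0"
proof -
  have p: "m*r+6*M > 0" using assms by (simp add: add_pos_pos)
  have sw: "6*M+m*r = m*r+6*M" by simp
  show ?thesis unfolding sw
    by (subst key_d) (use assms p key_poly[of M m r L] in auto)
qed

lemma quot_aux: fixes d M m :: real assumes "d \<noteq> 0"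
  shows "(0 * d^2 - (of_nat 2 * (m * d ^ (2 - Suc 0)) * (6 * M))) / ((d^2) ^ Suc (Suc 0)) = - 12 * M * m / d^3"
  using assms by (simp add: field_simps power2_eq_square power3_eq_cube)

locale sads2 = sads +
  fixes l :: nat
  assumes l2: "l \<ge> 2"
begin

definition "m = (real l + 2) * (real l - 1)"
definition "w = wl M l"

lemma m_pos: "m > 0" unfolding m_def using l2 by (intro mult_pos_pos) auto
lemma w_eq: "w = m * (m + 2) / (12 * M)" unfolding w_def m_def using wl_eq[OF l2] .
lemma w_pos: "w > 0" unfolding w_eq using m_pos Mpos by simp

definition "Gf r = r / (m * r + 6 * M)"
definition "G1 r = 6 * M / (m * r + 6 * M)^2"
definition "G2 r = - 12 * M * m / (m * r + 6 * M)^3"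
definition "F1 r = 2 * M / r^2 - 2 * L * r / 3"

lemma den_pos: "r > 0 \<Longrightarrow> m * r + 6 * M > 0"
  using m_pos Mpos by (simp add: add_pos_pos)

lemma Gf_deriv: "r > 0 \<Longrightarrow> (Gf has_real_derivative G1 r) (at r)"
  unfolding Gf_def G1_def using den_pos[of r]
  by (auto intro!: derivative_eq_intros simp: field_simps power2_eq_square)

lemma G1_deriv: assumes "r > 0" shows "(G1 has_real_derivative G2 r) (at r)"
proof -
  have d: "m * r + 6 * M \<noteq> 0" using den_pos[OF assms] by simp
  have dm: "((\<lambda>r. m * r + 6 * M) has_real_derivative m) (at r)"
    by (auto intro!: derivative_eq_intros)
  have "((\<lambda>r. 6 * M / (m * r + 6 * M)^2) has_real_derivative
      (0 * (m * r + 6 * M)^2 - (of_nat 2 * (m * (m * r + 6 * M) ^ (2 - Suc 0)) * (6 * M))) / (((m * r + 6 * M)^2) ^ Suc (Suc 0))) (at r)"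
    by (rule DERIV_quotient[OF DERIV_const DERIV_power[OF dm]]) (use d in simp)
  thus ?thesis unfolding G1_def[abs_def] G2_def quot_aux[OF d] .
qed

lemma F_deriv: "r > 0 \<Longrightarrow> (F has_real_derivative F1 r) (at r)"
  unfolding fSAdS_def F1_def
  by (auto intro!: derivative_eq_intros simp: field_simps power2_eq_square)

lemma key: assumes r: "r > 0"
  shows "- G2 r * F r - G1 r * F1 r - 2 * w * G1 r + VZ M L l r * Gf r = 0"
proof -
  have mul: "mul l = m" unfolding mul_def m_def by simp
  have ll: "real l * (real l + 1) = m + 2" unfolding m_def by (simp add: algebra_simps)
  have p: "m*r+6*M > 0" using den_pos[OF r] .
  have p2: "6*M+m*r \<noteq> 0" using p by (simp add: add.commute)
  show ?thesis unfolding G2_def G1_def F1_def Gf_def VZ_def fSAdS_def w_eq mul ll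
    by (rule key0[OF r Mpos m_pos])
qed

lemma phi_eq: "phiSol M L l t x = Gf (R x) * exp (w * (x + t))"
  unfolding phiSol_def Gf_def m_def w_def by simp

definition "E t x = exp (w * (x + t))"
definition "D1 t x = (G1 (R x) * F (R x) + w * Gf (R x)) * E t x"
definition "A r = G1 r * F r + w * Gf r"
definition "A1 r = G2 r * F r + G1 r * F1 r + w * G1 r"
definition "D2 t x = A1 (R x) * F (R x) * E t x + A (R x) * (E t x * w)"

lemma E_deriv: "((E t) has_real_derivative E t x * w) (at x)"
  unfolding E_def by (auto intro!: derivative_eq_intros)

lemma DERIV_eqI: "(f has_real_derivative a) F' \<Longrightarrow> a = b \<Longrightarrow> (f has_real_derivative b) F'"
  by simp

lemma phi_dx: assumes "x < 0" shows "((\<lambda>z. phiSol M L l t z) has_real_derivative D1 t x) (at x)"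
proof -
  have hx: "h < R x" using R_prop[OF assms] by simp
  hence rx: "R x > 0" using h_pos by linarith
  have "((\<lambda>z. Gf (R z) * E t z) has_real_derivative (G1 (R x) * F (R x)) * E t x + (E t x * w) * Gf (R x)) (at x)"
    by (intro DERIV_mult DERIV_chain2[OF Gf_deriv[OF rx] R_deriv[OF assms]] E_deriv)
  hence "((\<lambda>z. Gf (R z) * E t z) has_real_derivative D1 t x) (at x)"
    by (rule DERIV_eqI) (simp add: D1_def algebra_simps)
  moreover have "(\<lambda>z. phiSol M L l t z) = (\<lambda>z. Gf (R z) * E t z)" by (simp add: phi_eq E_def)
  ultimately show ?thesis by simp
qed

lemma A_deriv: assumes "r > 0" shows "(A has_real_derivative A1 r) (at r)"
proof -
  have "(A has_real_derivative (G2 r * F r + F1 r * G1 r) + w * G1 r) (at r)"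
    unfolding A_def[abs_def]
    by (intro DERIV_add DERIV_mult DERIV_cmult G1_deriv F_deriv Gf_deriv assms)
  thus ?thesis by (rule DERIV_eqI) (simp add: A1_def algebra_simps)
qed

lemma D1_dx: assumes "x < 0" shows "(D1 t has_real_derivative D2 t x) (at x)"
proof -
  have hx: "h < R x" using R_prop[OF assms] by simp
  hence rx: "R x > 0" using h_pos by linarith
  have "((\<lambda>z. A (R z) * E t z) has_real_derivative (A1 (R x) * F (R x)) * E t x + (E t x * w) * A (R x)) (at x)"
    by (intro DERIV_mult DERIV_chain2[OF A_deriv[OF rx] R_deriv[OF assms]] E_deriv)
  hence "((\<lambda>z. A (R z) * E t z) has_real_derivative D2 t x) (at x)"
    by (rule DERIV_eqI) (simp add: D2_def algebra_simps)
  moreover have "D1 t = (\<lambda>z. A (R z) * E t z)" by (simp add: D1_def A_def fun_eq_iff)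
  ultimately show ?thesis by simp
qed

lemma deriv_phi: "y < 0 \<Longrightarrow> deriv (\<lambda>z. phiSol M L l t z) y = D1 t y"
  using phi_dx by (rule DERIV_imp_deriv)

lemma deriv_phi_dx: assumes "x < 0"
  shows "(deriv (\<lambda>z. phiSol M L l t z) has_real_derivative D2 t x) (at x)"
  by (rule has_field_derivative_transform_within_open[OF D1_dx[OF assms], where S="{..<0}"])
     (use assms deriv_phi in auto)

lemma deriv2_phi: "x < 0 \<Longrightarrow> deriv (deriv (\<lambda>z. phiSol M L l t z)) x = D2 t x"
  using deriv_phi_dx by (rule DERIV_imp_deriv)

lemma phi_dt: "((\<lambda>\<tau>. phiSol M L l \<tau> x) has_real_derivative Gf (R x) * (exp (w * (x + s)) * w)) (at s)"
  unfolding phi_eq by (auto intro!: derivative_eq_intros)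

lemma deriv_phi_t: "deriv (\<lambda>\<tau>. phiSol M L l \<tau> x) = (\<lambda>s. Gf (R x) * (exp (w * (x + s)) * w))"
  using phi_dt by (intro ext DERIV_imp_deriv)

lemma phi_dt2: "(deriv (\<lambda>\<tau>. phiSol M L l \<tau> x) has_real_derivative Gf (R x) * (exp (w * (x + t)) * w * w)) (at t)"
  unfolding deriv_phi_t by (auto intro!: derivative_eq_intros)

lemma deriv2_phi_t: "deriv (deriv (\<lambda>\<tau>. phiSol M L l \<tau> x)) t = Gf (R x) * (exp (w * (x + t)) * w * w)"
  using phi_dt2 by (rule DERIV_imp_deriv)

lemma zer_alg: fixes G e w A1v Av Fv V G2v G1v F1v :: real
  assumes "A1v = G2v * Fv + G1v * F1v + w * G1v" "Av = G1v * Fv + w * G"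
  shows "G * (e * w * w) - (A1v * Fv * e + Av * (e * w)) + Fv * V * (G * e)
    = e * Fv * (- G2v * Fv - G1v * F1v - 2 * w * G1v + V * G)"
  unfolding assms by (simp add: algebra_simps)

lemma zerilli: assumes "x < 0"
  shows "deriv (deriv (\<lambda>\<tau>. phiSol M L l \<tau> x)) t - deriv (deriv (\<lambda>z. phiSol M L l t z)) x
          + F (R x) * VZ M L l (R x) * phiSol M L l t x = 0"
proof -
  have hx: "h < R x" using R_prop[OF assms] by simp
  hence rx: "R x > 0" using h_pos by linarith
  have k: "- G2 (R x) * F (R x) - G1 (R x) * F1 (R x) - 2 * w * G1 (R x) + VZ M L l (R x) * Gf (R x) = 0"
    using key[OF rx] .
  have "deriv (deriv (\<lambda>\<tau>. phiSol M L l \<tau> x)) t - deriv (deriv (\<lambda>z. phiSol M L l t z)) x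
          + F (R x) * VZ M L l (R x) * phiSol M L l t x
        = Gf (R x) * (E t x * w * w) - (A1 (R x) * F (R x) * E t x + A (R x) * (E t x * w))
          + F (R x) * VZ M L l (R x) * (Gf (R x) * E t x)"
    apply (subst deriv2_phi_t, subst deriv2_phi[OF assms])
    apply (simp only: phi_eq D2_def E_def)
    done
  also have "\<dots> = E t x * F (R x) * (- G2 (R x) * F (R x) - G1 (R x) * F1 (R x) - 2 * w * G1 (R x) + VZ M L l (R x) * Gf (R x))"
    by (rule zer_alg) (simp_all add: A1_def A_def)
  finally show ?thesis using k by simp
qed

end



lemma exp_int: fixes a :: real assumes a: "a > 0"
  shows "((\<lambda>x. exp (a * x)) has_integral 1 / a) {..<0}"
proof -
  have i0: "((\<lambda>x. exp (- a * x)) has_integral 1 / a) {0..}"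
    using has_integral_exp_minus_to_infinity[OF a, of 0] by simp
  have i1: "((\<lambda>x. exp (- a * x)) has_integral 1 / a) {0<..}"
  proof (rule has_integral_spike_set_eq[THEN iffD2, OF _ _ i0])
    show "negligible {x \<in> {0<..} - {0..}. exp (- a * x) \<noteq> 0}" by (rule negligible_subset[of "{}"]) auto
    show "negligible {x \<in> {0..} - {0<..}. exp (- a * x) \<noteq> 0}"
      by (rule negligible_subset[OF negligible_sing[of "0::real"]]) auto
  qed
  have ab: "(\<lambda>x. exp (- a * x)) absolutely_integrable_on {0<..}"
    using i1 by (intro nonnegative_absolutely_integrable_1) (auto simp: integrable_on_def)
  have lhs: "(\<lambda>x. \<bar>-1\<bar> * exp (a * (- x))) absolutely_integrable_on {0<..} \<and>
      integral {0<..} (\<lambda>x. \<bar>-1\<bar> * exp (a * (- x))) = 1 / a"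
    using ab integral_unique[OF i1] by simp
  have "(\<lambda>x. exp (a * x)) absolutely_integrable_on (uminus ` {0<..}) \<and>
      integral (uminus ` {0<..}) (\<lambda>x. exp (a * x)) = 1 / a"
  proof (rule has_absolute_integral_change_of_variables_1'
      [where S="{0<..}" and g=uminus and g'="\<lambda>_. -1" and f="\<lambda>x. exp (a * x)" and b="1/a", THEN iffD1])
    show "({0<..} :: real set) \<in> sets lebesgue" using Compl_in_sets_lebesgue[of "{..0::real}"] by simp
    show "(uminus has_real_derivative -1) (at x within {0<..})" for x :: real
      by (auto intro!: derivative_eq_intros)
    show "inj_on uminus ({0<..} :: real set)" by (simp add: inj_on_def)
  qed (use lhs in simp)
  hence ai: "(\<lambda>x. exp (a * x)) absolutely_integrable_on {..<0}"
    and ii: "integral {..<0} (\<lambda>x. exp (a * x)) = 1 / a"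
    by simp_all
  have "(\<lambda>x. exp (a * x)) integrable_on {..<0}" by (rule set_lebesgue_integral_eq_integral(1)[OF ai])
  hence "((\<lambda>x. exp (a * x)) has_integral integral {..<0} (\<lambda>x. exp (a * x))) {..<0}"
    by (rule integrable_integral)
  thus ?thesis unfolding ii .
qed

lemma exp2_int: "w > 0 \<Longrightarrow> ((\<lambda>x. c * exp ((2 * w) * x)) has_integral c * (1 / (2 * w))) {..<0}"
  for w c :: real
  by (rule has_integral_mult_right[OF exp_int]) simp

context sads2 begin

lemma phi_cont: "continuous_on {..<0} (\<lambda>x. phiSol M L l t x)"
  by (rule continuous_at_imp_continuous_on) (use phi_dx DERIV_isCont in blast)

lemma Gf_bounds: assumes "r > 0" shows "0 < Gf r" "Gf r \<le> 1 / m"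
proof -
  show "0 < Gf r" unfolding Gf_def using den_pos[OF assms] assms by simp
  have "r / (m * r + 6 * M) \<le> r / (m * r)"
    by (rule frac_le) (use assms m_pos Mpos in auto)
  thus "Gf r \<le> 1 / m" unfolding Gf_def using assms by simp
qed

lemma Gf_mono: assumes "0 < a" "a \<le> b" shows "Gf a \<le> Gf b"
proof -
  have da: "m * a + 6 * M > 0" and db: "m * b + 6 * M > 0" using den_pos assms by auto
  have "6 * M * a \<le> 6 * M * b" using assms Mpos by simp
  hence c: "a * (m * b + 6 * M) \<le> b * (m * a + 6 * M)" by (simp add: algebra_simps)
  show ?thesis unfolding Gf_def using da db c by (simp add: field_simps)
qed

lemma exp_sq: "exp (w * x) ^ 2 = exp ((2 * w) * x)"
  by (simp add: power2_eq_square flip: exp_add)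

lemma phi_sq: "(phiSol M L l t x)^2 = exp (w * t) ^ 2 * (phiSol M L l 0 x)^2"
  unfolding phi_eq by (simp add: distrib_left exp_add power_mult_distrib algebra_simps)

lemma phi_sq_fun: "(\<lambda>x. (phiSol M L l t x)^2) = (\<lambda>x. exp (w * t) ^ 2 * (phiSol M L l 0 x)^2)"
  by (rule ext) (rule phi_sq)

lemma phi0_sq: "(phiSol M L l 0 x)^2 = Gf (R x) ^ 2 * exp ((2 * w) * x)"
  unfolding phi_eq by (simp add: power_mult_distrib exp_sq)

lemma phi_sq_cont: "continuous_on {..<0} (\<lambda>x. (phiSol M L l t x)^2)"
  by (intro continuous_on_power phi_cont)

lemma int0: "(\<lambda>x. (phiSol M L l 0 x)^2) integrable_on {..<0}"
proof (rule measurable_bounded_by_integrable_imp_integrable_real)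
  show "(\<lambda>x. (phiSol M L l 0 x)^2) \<in> borel_measurable (lebesgue_on {..<0})"
    by (rule continuous_imp_measurable_on_sets_lebesgue[OF phi_sq_cont]) simp
  show "(\<lambda>x. (1/m)^2 * exp ((2 * w) * x)) integrable_on {..<0}"
    using exp2_int[OF w_pos] unfolding integrable_on_def by blast
  show "\<bar>(phiSol M L l 0 x)^2\<bar> \<le> (1/m)^2 * exp ((2 * w) * x)" if "x \<in> {..<0}" for x
  proof -
    have rx: "R x > 0" using R_prop[of x] that h_pos by auto
    have "Gf (R x) ^ 2 \<le> (1/m)^2" using Gf_bounds[OF rx] by (intro power_mono) auto
    thus ?thesis unfolding phi0_sq by (simp add: mult_right_mono)
  qed
qed simp

lemma intt: "(\<lambda>x. (phiSol M L l t x)^2) integrable_on {..<0}"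
  unfolding phi_sq_fun[of t] using has_integral_mult_right[OF integrable_integral[OF int0]] unfolding integrable_on_def by blast

lemma I0_pos: "integral {..<0} (\<lambda>x. (phiSol M L l 0 x)^2) > 0"
proof -
  have gh: "Gf h > 0" using Gf_bounds(1)[OF h_pos] .
  have "integral {..<0} (\<lambda>x. Gf h ^ 2 * exp ((2 * w) * x)) \<le> integral {..<0} (\<lambda>x. (phiSol M L l 0 x)^2)"
  proof (rule integral_le)
    show "(\<lambda>x. Gf h ^ 2 * exp ((2 * w) * x)) integrable_on {..<0}"
      using exp2_int[OF w_pos] unfolding integrable_on_def by blast
    show "(\<lambda>x. (phiSol M L l 0 x)^2) integrable_on {..<0}" by (rule int0)
    fix x :: real assume "x \<in> {..<0}"
    hence hx: "h < R x" using R_prop[of x] by auto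
    have "Gf h \<le> Gf (R x)" using Gf_mono[OF h_pos] hx by simp
    hence "Gf h ^ 2 \<le> Gf (R x) ^ 2" using gh by (intro power_mono) auto
    thus "Gf h ^ 2 * exp ((2 * w) * x) \<le> (phiSol M L l 0 x)^2" unfolding phi0_sq by (simp add: mult_right_mono)
  qed
  moreover have "integral {..<0} (\<lambda>x. Gf h ^ 2 * exp ((2 * w) * x)) = Gf h ^ 2 * (1 / (2 * w))"
    using exp2_int[OF w_pos] by (rule integral_unique)
  moreover have "Gf h ^ 2 * (1 / (2 * w)) > 0" using gh w_pos by simp
  ultimately show ?thesis by linarith
qed

lemma norm_eq: "sqrt (integral {..<0} (\<lambda>x. (phiSol M L l t x)^2))
    = sqrt (integral {..<0} (\<lambda>x. (phiSol M L l 0 x)^2)) * exp (w * t)"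
proof -
  have "integral {..<0} (\<lambda>x. (phiSol M L l t x)^2) = exp (w * t) ^ 2 * integral {..<0} (\<lambda>x. (phiSol M L l 0 x)^2)"
    unfolding phi_sq_fun[of t] by (rule integral_mult_right)
  thus ?thesis by (simp add: real_sqrt_mult)
qed

lemma phi_meas: "set_borel_measurable lborel {..<0} (\<lambda>x. phiSol M L l t x)"
  unfolding set_borel_measurable_def measurable_lborel2
  by (rule borel_measurable_continuous_on_indicator[OF _ phi_cont]) simp

lemma inv_lim: "((\<lambda>r::real. inverse r) \<longlongrightarrow> 0) at_top"
  by (intro tendsto_inverse_0_at_top filterlim_ident)

lemma Gf_lim: "(Gf \<longlongrightarrow> 1 / m) at_top"
proof -
  have "((\<lambda>r. 1 / (m + 6 * M * inverse r)) \<longlongrightarrow> 1 / (m + 6 * M * 0)) at_top"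
    using m_pos by (intro tendsto_intros inv_lim) auto
  hence l: "((\<lambda>r. 1 / (m + 6 * M * inverse r)) \<longlongrightarrow> 1 / m) at_top" by simp
  have "eventually (\<lambda>r. 1 / (m + 6 * M * inverse r) = Gf r) at_top"
    using eventually_gt_at_top[of 0]
    by eventually_elim (auto simp: Gf_def field_simps)
  with l show ?thesis by (rule Lim_transform_eventually)
qed

lemma A_lim: "(A \<longlongrightarrow> - 2 * M * L / m^2 + w / m) at_top"
proof -
  let ?g = "\<lambda>r. 6 * M * (inverse r ^ 2 - 2 * M * inverse r ^ 3 - L / 3) / (m + 6 * M * inverse r)^2"
  have "(?g \<longlongrightarrow> 6 * M * (0 ^ 2 - 2 * M * 0 ^ 3 - L / 3) / (m + 6 * M * 0)^2) at_top"
    using m_pos by (intro tendsto_intros inv_lim) auto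
  note l0 = this
  have c: "6 * M * (0 ^ 2 - 2 * M * 0 ^ 3 - L / 3) / (m + 6 * M * 0)^2 = - 2 * M * L / (m^2::real)"
    by (simp add: field_simps)
  have l1: "(?g \<longlongrightarrow> - 2 * M * L / m^2) at_top" using l0 unfolding c .
  have "eventually (\<lambda>r. ?g r = G1 r * F r) at_top"
    using eventually_gt_at_top[of 0]
  proof eventually_elim
    case (elim r)
    have d: "m * r + 6 * M > 0" using den_pos[OF elim] .
    have d1: "m + 6 * M * inverse r = (m * r + 6 * M) / r" using elim by (simp add: field_simps)
    have d2: "(m + 6 * M * inverse r)^2 = (m * r + 6 * M)^2 / r^2" unfolding d1 by (rule power_divide)
    have e1: "(inverse r ^ 2 - 2 * M * inverse r ^ 3 - L / 3) * r^2 = 1 - 2 * M / r - L * r^2 / 3"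
      using elim by (simp add: field_simps power2_eq_square power3_eq_cube)
    have "?g r = 6 * M / (m * r + 6 * M)^2 * ((inverse r ^ 2 - 2 * M * inverse r ^ 3 - L / 3) * r^2)"
      unfolding d2 by (simp add: divide_divide_eq_right mult.assoc)
    also have "\<dots> = G1 r * F r" unfolding e1 G1_def fSAdS_def ..
    finally show ?case .
  qed
  with l1 have l2: "((\<lambda>r. G1 r * F r) \<longlongrightarrow> - 2 * M * L / m^2) at_top" by (rule Lim_transform_eventually)
  have "((\<lambda>r. G1 r * F r + w * Gf r) \<longlongrightarrow> - 2 * M * L / m^2 + w * (1 / m)) at_top"
    by (intro tendsto_intros l2 Gf_lim)
  thus ?thesis unfolding A_def[abs_def] by simp
qed

lemma robin:
  "((\<lambda>x. phiSol M L l t x) \<longlongrightarrow> 1 / m * exp (w * t)) (at_left 0)"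
  "(deriv (\<lambda>x. phiSol M L l t x) \<longlongrightarrow> (- 2 * M * L / m^2 + w / m) * exp (w * t)) (at_left 0)"
proof -
  have e: "((\<lambda>x. exp (w * (x + t))) \<longlongrightarrow> exp (w * (0 + t))) (at_left 0)"
    by (intro tendsto_intros)
  have "((\<lambda>x. Gf (R x) * exp (w * (x + t))) \<longlongrightarrow> 1 / m * exp (w * (0 + t))) (at_left 0)"
    by (intro tendsto_mult filterlim_compose[OF Gf_lim R_lim] e)
  thus "((\<lambda>x. phiSol M L l t x) \<longlongrightarrow> 1 / m * exp (w * t)) (at_left 0)" by (simp add: phi_eq)
  have "((\<lambda>x. A (R x) * exp (w * (x + t))) \<longlongrightarrow> (- 2 * M * L / m^2 + w / m) * exp (w * (0 + t))) (at_left 0)"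
    by (intro tendsto_mult filterlim_compose[OF A_lim R_lim] e)
  hence l: "((\<lambda>x. A (R x) * exp (w * (x + t))) \<longlongrightarrow> (- 2 * M * L / m^2 + w / m) * exp (w * t)) (at_left 0)"
    by simp
  have ev: "eventually (\<lambda>x. x \<in> {-1<..<0}) (at_left (0::real))"
    by (rule eventually_at_left_real) simp
  have "eventually (\<lambda>x. A (R x) * exp (w * (x + t)) = deriv (\<lambda>x. phiSol M L l t x) x) (at_left 0)"
    using ev
    by eventually_elim (simp add: deriv_phi D1_def A_def E_def)
  with l show "(deriv (\<lambda>x. phiSol M L l t x) \<longlongrightarrow> (- 2 * M * L / m^2 + w / m) * exp (w * t)) (at_left 0)"
    by (rule Lim_transform_eventually)
qed

end

theorem mainTheorem10:
  fixes M \<Lambda> \<alpha> :: real and l :: nat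
  assumes "\<Lambda> < 0" and "M > 0" and "l \<ge> 2"
    and "-pi \<le> \<alpha>" and "\<alpha> \<le> pi"
    and "tan \<alpha> = wl M l - 2 * M * \<Lambda> / ((real l - 1) * (real l + 2))"
  shows
    \<comment> \<open>Zerilli equation on the whole domain\<close>
    "(\<forall>t x. x < 0 \<longrightarrow>
        (\<forall>y<0. ((\<lambda>z. phiSol M \<Lambda> l t z) has_real_derivative
                   deriv (\<lambda>z. phiSol M \<Lambda> l t z) y) (at y))
      \<and> ((deriv (\<lambda>z. phiSol M \<Lambda> l t z)) has_real_derivative
           deriv (deriv (\<lambda>z. phiSol M \<Lambda> l t z)) x) (at x)
      \<and> (\<forall>s. ((\<lambda>\<tau>. phiSol M \<Lambda> l \<tau> x) has_real_derivative
                   deriv (\<lambda>\<tau>. phiSol M \<Lambda> l \<tau> x) s) (at s))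
      \<and> ((deriv (\<lambda>\<tau>. phiSol M \<Lambda> l \<tau> x)) has_real_derivative
           deriv (deriv (\<lambda>\<tau>. phiSol M \<Lambda> l \<tau> x)) t) (at t)
      \<and> deriv (deriv (\<lambda>\<tau>. phiSol M \<Lambda> l \<tau> x)) t
          - deriv (deriv (\<lambda>z. phiSol M \<Lambda> l t z)) x
          + fSAdS M \<Lambda> (rOf M \<Lambda> x) * VZ M \<Lambda> l (rOf M \<Lambda> x) * phiSol M \<Lambda> l t x = 0)
   \<and> \<comment> \<open>L^2((-infinity,0), dr*) for every t\<close>
    (\<forall>t. set_borel_measurable lborel {..<0} (\<lambda>x. phiSol M \<Lambda> l t x)
        \<and> (\<lambda>x. (phiSol M \<Lambda> l t x)^2) integrable_on {..<0})
   \<and> \<comment> \<open>exponential growth in t of the L^2 norm\<close>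
    (\<exists>c>0. \<exists>a>0. \<forall>t.
        sqrt (integral {..<0} (\<lambda>x. (phiSol M \<Lambda> l t x)^2)) = c * exp (a * t))
   \<and> \<comment> \<open>Robin boundary condition at r* = 0\<close>
    (\<forall>t. \<exists>b db. ((\<lambda>x. phiSol M \<Lambda> l t x) \<longlongrightarrow> b) (at_left 0)
        \<and> (deriv (\<lambda>x. phiSol M \<Lambda> l t x) \<longlongrightarrow> db) (at_left 0)
        \<and> db = tan \<alpha> * b)"
  proof -
  interpret sads2 M \<Lambda> l using assms by unfold_locales auto
  show ?thesis
  proof (intro conjI allI impI)
    fix t x y :: real assume x: "x < 0" and y: "y < 0"
    show "((\<lambda>z. phiSol M \<Lambda> l t z) has_real_derivative deriv (\<lambda>z. phiSol M \<Lambda> l t z) y) (at y)"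
      using phi_dx[OF y] deriv_phi[OF y] by simp
  next
    fix t x :: real assume x: "x < 0"
    show "(deriv (\<lambda>z. phiSol M \<Lambda> l t z) has_real_derivative deriv (deriv (\<lambda>z. phiSol M \<Lambda> l t z)) x) (at x)"
      using deriv_phi_dx[OF x] deriv2_phi[OF x] by simp
  next
    fix t x s :: real assume x: "x < 0"
    show "((\<lambda>\<tau>. phiSol M \<Lambda> l \<tau> x) has_real_derivative deriv (\<lambda>\<tau>. phiSol M \<Lambda> l \<tau> x) s) (at s)"
      using phi_dt deriv_phi_t by simp
  next
    fix t x :: real assume x: "x < 0"
    show "(deriv (\<lambda>\<tau>. phiSol M \<Lambda> l \<tau> x) has_real_derivative deriv (deriv (\<lambda>\<tau>. phiSol M \<Lambda> l \<tau> x)) t) (at t)"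
      using phi_dt2 deriv2_phi_t by simp
  next
    fix t x :: real assume x: "x < 0"
    show "deriv (deriv (\<lambda>\<tau>. phiSol M \<Lambda> l \<tau> x)) t - deriv (deriv (\<lambda>z. phiSol M \<Lambda> l t z)) x
          + fSAdS M \<Lambda> (rOf M \<Lambda> x) * VZ M \<Lambda> l (rOf M \<Lambda> x) * phiSol M \<Lambda> l t x = 0"
      using zerilli[OF x] by simp
  next
    fix t :: real
    show "set_borel_measurable lborel {..<0} (\<lambda>x. phiSol M \<Lambda> l t x)" by (rule phi_meas)
    show "(\<lambda>x. (phiSol M \<Lambda> l t x)^2) integrable_on {..<0}" by (rule intt)
  next
    show "\<exists>c>0. \<exists>a>0. \<forall>t. sqrt (integral {..<0} (\<lambda>x. (phiSol M \<Lambda> l t x)^2)) = c * exp (a * t)"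
    proof -
      have n: "\<forall>t. sqrt (integral {..<0} (\<lambda>x. (phiSol M \<Lambda> l t x)^2))
          = sqrt (integral {..<0} (\<lambda>x. (phiSol M \<Lambda> l 0 x)^2)) * exp (w * t)"
        by (intro allI norm_eq)
      have c: "0 < sqrt (integral {..<0} (\<lambda>x. (phiSol M \<Lambda> l 0 x)^2))" using I0_pos by simp
      show ?thesis using n c w_pos by blast
    qed
  next
    fix t :: real
    have ta: "tan \<alpha> = w - 2 * M * \<Lambda> / m" using assms(6) unfolding w_def m_def by (simp add: mult.commute)
    have "(- 2 * M * \<Lambda> / m^2 + w / m) * exp (w * t) = tan \<alpha> * (1 / m * exp (w * t))"
      unfolding ta using m_pos by (simp add: field_simps power2_eq_square)
    thus "\<exists>b db. ((\<lambda>x. phiSol M \<Lambda> l t x) \<longlongrightarrow> b) (at_left 0)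
        \<and> (deriv (\<lambda>x. phiSol M \<Lambda> l t x) \<longlongrightarrow> db) (at_left 0) \<and> db = tan \<alpha> * b"
      using robin[of t] by blast
  qed
qed


end
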